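(* Let $f$ be an extended strategy function for a tree $T=(V,E,w)$, let $v\in V$, and suppose some vertex screens $v$; let $s_{\min}$ be the vertex screening $v$ whose interval $f(s_{\min})$ is minimal (smallest) among all vertices screening $v$. Let $f'$ assign to each vertex $u$ an interval $f'(u)$ with $|f'(u)|\ge w(u)$ such that: (1) $f'(u)=f(u)$ for every $u\notin N(v)$; (2) $f'(u)=f(u)$ for every $u\in N(v)$ that screens $v$; (3) $f'(u)<f(s_{\min})$ for every $u\in N(v)$ that does not screen $v$ (including $u=v$). If the restriction of $f'$ to $N(v)$ is an extended strategy function for the subtree $T[N(v)]$, then $f'$ is an extended strategy function for $T$.
   Context: Intervals are of the form $[a,b)$ with integers $0\le a<b$, $|[a,b)|=b-a$; for $I=[a,b)$, $I'=[a',b')$ write $I>I'$ (equivalently $I'<I$) iff $a\ge b'$. An extended strategy function for a tree $T=(V,E,w)$ is a map $f$ assigning to each vertex $v$ an interval $f(v)$ with $|f(v)|\ge w(v)$, such that for any distinct $v_1,v_2$ with $f(v_1)\cap f(v_2)\ne\emptyset$, the path between $v_1$ and $v_2$ contains a vertex $v_3$ with $f(v_3)>f(v_1)$ and $f(v_3)>f(v_2)$. A vertex $u$ screens $v$ if $f(v)<f(u)$ and $u$ is the only vertex $x$ on the path between $v$ and $u$ with $f(v)<f(x)$; vertices screening $v$ have pairwise disjoint intervals, so there is a unique smallest. The screening neighborhood $N(v)$ is the set of vertices $u$ such that either $u$ screens $v$, or the path between $u$ and $v$ contains no vertex screening $v$ (in particular $v\in N(v)$); $T[N(v)]$ is the subtree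 induced by $N(v)$. *)

theory Defs
  imports Main
begin

text \<open>Weighted trees: vertex set V, symmetric irreflexive adjacency E on V, weight w.
Intervals [a,b) are pairs (a,b) of naturals with a < b.\<close>

type_synonym interval = "nat \<times> nat"

definition is_interval :: "interval \<Rightarrow> bool" where
  "is_interval I \<longleftrightarrow> fst I < snd I"

definition ilen :: "interval \<Rightarrow> nat" where
  "ilen I = snd I - fst I"

definition igt :: "interval \<Rightarrow> interval \<Rightarrow> bool" where
  "igt I I' \<longleftrightarrow> fst I \<ge> snd I'"

definition ilt :: "interval \<Rightarrow> interval \<Rightarrow> bool" where
  "ilt I I' \<longleftrightarrow> igt I' I"

definition iinter :: "interval \<Rightarrow> interval \<Rightarrow> bool" where
  "iinter I I' \<longleftrightarrow> {fst I..<snd I} \<inter> {fst I'..<snd I'} \<noteq> {}"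

definition path_between :: "'a set \<Rightarrow> ('a \<Rightarrow> 'a \<Rightarrow> bool) \<Rightarrow> 'a \<Rightarrow> 'a \<Rightarrow> 'a list \<Rightarrow> bool" where
  "path_between V E u v xs \<longleftrightarrow> xs \<noteq> [] \<and> hd xs = u \<and> last xs = v \<and> distinct xs
     \<and> set xs \<subseteq> V \<and> (\<forall>i. Suc i < length xs \<longrightarrow> E (xs ! i) (xs ! Suc i))"

definition is_tree :: "'a set \<Rightarrow> ('a \<Rightarrow> 'a \<Rightarrow> bool) \<Rightarrow> bool" where
  "is_tree V E \<longleftrightarrow> finite V \<and> V \<noteq> {}
     \<and> (\<forall>x y. E x y \<longrightarrow> x \<in> V \<and> y \<in> V \<and> x \<noteq> y \<and> E y x)
     \<and> (\<forall>u\<in>V. \<forall>v\<in>V. \<exists>xs. path_between V E u v xs)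
     \<and> (\<forall>u v xs ys. path_between V E u v xs \<and> path_between V E u v ys \<longrightarrow> xs = ys)"

definition ext_strategy :: "'a set \<Rightarrow> ('a \<Rightarrow> 'a \<Rightarrow> bool) \<Rightarrow> ('a \<Rightarrow> nat) \<Rightarrow> ('a \<Rightarrow> interval) \<Rightarrow> bool" where
  "ext_strategy V E w f \<longleftrightarrow>
     (\<forall>v\<in>V. is_interval (f v) \<and> ilen (f v) \<ge> w v) \<and>
     (\<forall>v1\<in>V. \<forall>v2\<in>V. v1 \<noteq> v2 \<and> iinter (f v1) (f v2) \<longrightarrow>
        (\<exists>xs. path_between V E v1 v2 xs \<and>
           (\<exists>v3\<in>set xs. igt (f v3) (f v1) \<and> igt (f v3) (f v2))))"

definition screens :: "'a set \<Rightarrow> ('a \<Rightarrow> 'a \<Rightarrow> bool) \<Rightarrow> ('a \<Rightarrow> interval) \<Rightarrow> 'a \<Rightarrow> 'a \<Rightarrow> bool" where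
  "screens V E f u v \<longleftrightarrow> ilt (f v) (f u) \<and>
     (\<exists>xs. path_between V E v u xs \<and> (\<forall>x\<in>set xs. ilt (f v) (f x) \<longrightarrow> x = u))"

definition screen_nbhd :: "'a set \<Rightarrow> ('a \<Rightarrow> 'a \<Rightarrow> bool) \<Rightarrow> ('a \<Rightarrow> interval) \<Rightarrow> 'a \<Rightarrow> 'a set" where
  "screen_nbhd V E f v = {u \<in> V. screens V E f u v \<or>
     (\<exists>xs. path_between V E u v xs \<and> (\<forall>x\<in>set xs. \<not> screens V E f x v))}"

end

theory Submission imports Defs begin

lemma path_alt: "path_between V E u v xs \<longleftrightarrow> xs \<noteq> [] \<and> hd xs = u \<and> last xs = v \<and> distinct xs \<and> set xs \<subseteq> V \<and> successively E xs"
  unfolding path_between_def successively_conv_nth by blast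

lemma last_take_Suc: "i < length xs \<Longrightarrow> last (take (Suc i) xs) = xs!i"
  by (subst last_conv_nth) (auto simp: min_def intro: arg_cong[where f="nth xs"])

lemma path_rev: assumes "path_between V E u v xs" "\<And>x y. E x y \<Longrightarrow> E y x"
  shows "path_between V E v u (rev xs)"
  using assms unfolding path_alt by (auto simp: hd_rev last_rev elim: successively_mono)

lemma path_take: assumes "path_between V E u v xs" "i < length xs"
  shows "path_between V E u (xs!i) (take (Suc i) xs)"
proof -
  have "successively E (take (Suc i) xs @ drop (Suc i) xs)" using assms(1) by (simp add: path_alt)
  then have "successively E (take (Suc i) xs)" by (simp only: successively_append_iff)
  moreover have "set (take (Suc i) xs) \<subseteq> V" using assms(1) set_take_subset[of "Suc i" xs] unfolding path_alt by blast
  ultimately show ?thesis using assms unfolding path_alt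
    by (simp add: last_take_Suc)
qed

lemma path_drop: assumes "path_between V E u v xs" "i < length xs"
  shows "path_between V E (xs!i) v (drop i xs)"
proof -
  have "successively E (take i xs @ drop i xs)" using assms(1) by (simp add: path_alt)
  then have "successively E (drop i xs)" by (simp only: successively_append_iff)
  moreover have "set (drop i xs) \<subseteq> V" using assms(1) set_drop_subset[of i xs] unfolding path_alt by blast
  ultimately show ?thesis using assms unfolding path_alt
    by (simp add: hd_drop_conv_nth)
qed

lemma path_concat:
  assumes p: "path_between V E a b p" and q: "path_between V E b c q"
  shows "\<exists>r. path_between V E a c r \<and> set r \<subseteq> set p \<union> set q"
proof -
  have ex: "\<exists>i. i < length p \<and> p!i \<in> set q"
    proof -
    have "p \<noteq> []" "last p = b" "b \<in> set q" using p q unfolding path_alt by (auto intro: last_in_set)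
    then show ?thesis by (metis last_conv_nth diff_less length_greater_0_conv zero_less_one)
  qed
  define i where "i = (LEAST i. i < length p \<and> p!i \<in> set q)"
  have i: "i < length p" "p!i \<in> set q" using LeastI_ex[OF ex] i_def by auto
  have lt: "\<And>k. k < i \<Longrightarrow> p!k \<notin> set q"
    using not_less_Least i_def i(1) by (metis (mono_tags, lifting) less_trans)
  obtain j where j: "j < length q" "q!j = p!i" using i(2) by (metis in_set_conv_nth)
  define r where "r = take i p @ drop j q"
  have d1: "set (take i p) \<inter> set q = {}"
    using lt i(1) by (auto simp: in_set_conv_nth)
  have sp: "successively E p" and sq: "successively E q" using p q by (auto simp: path_alt)
  have st: "successively E (take i p)"
    using sp by (metis append_take_drop_id successively_append_iff)
  have sd: "successively E (drop j q)"
    using sq by (metis append_take_drop_id successively_append_iff)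
  have hdd: "hd (drop j q) = p!i" using j by (simp add: hd_drop_conv_nth)
  have bd: "take i p = [] \<or> E (last (take i p)) (hd (drop j q))"
  proof (cases i)
    case 0 then show ?thesis by simp
  next
    case (Suc m)
    have "E (p!m) (p!Suc m)" using successively_nth[OF sp] i(1) Suc by simp
    moreover have "last (take i p) = p!m" using Suc i(1) last_take_Suc[of m p] by simp
    ultimately show ?thesis using hdd Suc by simp
  qed
  have "successively E r" unfolding r_def successively_append_iff using st sd bd by blast
  moreover have "r \<noteq> []" using j by (simp add: r_def)
  moreover have "hd r = a"
  proof (cases i)
    case 0 then show ?thesis using hdd p j unfolding r_def path_alt by (metis hd_conv_nth append_Nil take_0)
  next
    case (Suc m) then show ?thesis using p i(1) unfolding r_def path_alt by simp
  qed
  moreover have "last r = c" using q j unfolding r_def path_alt by simp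
  moreover have "distinct r"
  proof -
    have "distinct p" "distinct q" using p q unfolding path_alt by auto
    moreover have "set (take i p) \<inter> set (drop j q) = {}" using d1 set_drop_subset[of j q] by blast
    ultimately show ?thesis unfolding r_def by simp
  qed
  moreover have "set r \<subseteq> set p \<union> set q" unfolding r_def
    using set_take_subset set_drop_subset by fastforce
  moreover have "set r \<subseteq> V"
  proof -
    have "set p \<subseteq> V" "set q \<subseteq> V" using p q unfolding path_alt by auto
    then show ?thesis using \<open>set r \<subseteq> set p \<union> set q\<close> by blast
  qed
  ultimately show ?thesis unfolding path_alt by blast
qed

lemma screen_on_path:
  assumes xs: "path_between V E u v xs" and sym: "\<And>x y. E x y \<Longrightarrow> E y x"
    and x: "x \<in> set xs" "ilt (f v) (f x)"
  shows "\<exists>y\<in>set xs. screens V E f y v"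
proof -
  define P where "P = (\<lambda>j. j < length xs \<and> ilt (f v) (f (xs!j)))"
  obtain k where k: "P k" using x unfolding P_def by (metis in_set_conv_nth)
  have fin: "\<And>j. P j \<Longrightarrow> j \<le> length xs" by (simp add: P_def)
  define i where "i = (GREATEST j. P j)"
  have Pi: "P i" using GreatestI_nat[of P k, OF k fin] i_def by simp
  have maxi: "j \<le> i" if "P j" for j unfolding i_def by (rule Greatest_le_nat[of P j, OF that fin])
  have il: "i < length xs" and ilt: "ilt (f v) (f (xs!i))" using Pi unfolding P_def by auto
  have dp: "path_between V E (xs!i) v (drop i xs)" by (rule path_drop[OF xs il])
  have rp: "path_between V E v (xs!i) (rev (drop i xs))" by (rule path_rev[OF dp sym])
  have "screens V E f (xs!i) v"
    unfolding screens_def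
  proof (intro conjI exI[of _ "rev (drop i xs)"])
    show "ilt (f v) (f (xs ! i))" by (rule ilt)
    show "path_between V E v (xs ! i) (rev (drop i xs))" by (rule rp)
    show "\<forall>z\<in>set (rev (drop i xs)). ilt (f v) (f z) \<longrightarrow> z = xs!i"
    proof (intro ballI impI)
      fix z assume z: "z \<in> set (rev (drop i xs))" "ilt (f v)(f z)"
      then have "z \<in> set (drop i xs)" by simp
      then obtain m where m0: "m < length (drop i xs)" "z = drop i xs ! m"
        by (metis in_set_conv_nth)
      then have m: "i + m < length xs" "z = xs!(i+m)" using il by auto
      then have "P (i+m)" using z unfolding P_def by simp
      then have "i + m \<le> i" by (rule maxi)
      then have "m = 0" by simp
      then show "z = xs!i" using m by simp
    qed
  qed
  then show ?thesis using il by auto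
qed


lemma iinter_iff: "iinter I J \<longleftrightarrow> fst I < snd I \<and> fst J < snd J \<and> fst I < snd J \<and> fst J < snd I"
  unfolding iinter_def
proof
  assume "{fst I..<snd I} \<inter> {fst J..<snd J} \<noteq> {}"
  then obtain t where "t \<in> {fst I..<snd I}" "t \<in> {fst J..<snd J}" by blast
  then show "fst I < snd I \<and> fst J < snd J \<and> fst I < snd J \<and> fst J < snd I" by auto
next
  assume h: "fst I < snd I \<and> fst J < snd J \<and> fst I < snd J \<and> fst J < snd I"
  have "max (fst I) (fst J) \<in> {fst I..<snd I} \<inter> {fst J..<snd J}" using h by auto
  then show "{fst I..<snd I} \<inter> {fst J..<snd J} \<noteq> {}" by blast
qed

theorem mainTheorem15:
  fixes V :: "'a set" and E :: "'a \<Rightarrow> 'a \<Rightarrow> bool" and w :: "'a \<Rightarrow> nat"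
    and f f' :: "'a \<Rightarrow> interval" and v smin :: 'a
  assumes tree: "is_tree V E"
    and f: "ext_strategy V E w f"
    and v: "v \<in> V"
    and smin: "screens V E f smin v"
    and smin_min: "\<And>u. screens V E f u v \<Longrightarrow> u \<noteq> smin \<Longrightarrow> ilt (f smin) (f u)"
    and f'_int: "\<And>u. u \<in> V \<Longrightarrow> is_interval (f' u) \<and> ilen (f' u) \<ge> w u"
    and out: "\<And>u. u \<in> V \<Longrightarrow> u \<notin> screen_nbhd V E f v \<Longrightarrow> f' u = f u"
    and scr: "\<And>u. u \<in> screen_nbhd V E f v \<Longrightarrow> screens V E f u v \<Longrightarrow> f' u = f u"
    and nscr: "\<And>u. u \<in> screen_nbhd V E f v \<Longrightarrow> \<not> screens V E f u v \<Longrightarrow> ilt (f' u) (f smin)"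
    and sub: "ext_strategy (screen_nbhd V E f v) E w f'"
  shows "ext_strategy V E w f'"
proof -
  let ?N = "screen_nbhd V E f v"
  let ?S = "\<lambda>u. screens V E f u v"
  have sym: "\<And>x y. E x y \<Longrightarrow> E y x" using tree unfolding is_tree_def by blast
  have pex: "\<And>a b. a \<in> V \<Longrightarrow> b \<in> V \<Longrightarrow> \<exists>xs. path_between V E a b xs"
    using tree unfolding is_tree_def by blast
  have puniq: "\<And>a b xs ys. path_between V E a b xs \<Longrightarrow> path_between V E a b ys \<Longrightarrow> xs = ys"
    using tree unfolding is_tree_def by blast
  have fint: "\<And>u. u \<in> V \<Longrightarrow> fst (f u) < snd (f u)"
    using f unfolding ext_strategy_def is_interval_def by blast
  have fcond: "\<And>a b. a \<in> V \<Longrightarrow> b \<in> V \<Longrightarrow> a \<noteq> b \<Longrightarrow> iinter (f a) (f b) \<Longrightarrow>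
     \<exists>xs. path_between V E a b xs \<and> (\<exists>y\<in>set xs. igt (f y) (f a) \<and> igt (f y) (f b))"
    using f unfolding ext_strategy_def by blast
  have subcond: "\<And>a b. a \<in> ?N \<Longrightarrow> b \<in> ?N \<Longrightarrow> a \<noteq> b \<Longrightarrow> iinter (f' a) (f' b) \<Longrightarrow>
     \<exists>xs. path_between ?N E a b xs \<and> (\<exists>y\<in>set xs. igt (f' y) (f' a) \<and> igt (f' y) (f' b))"
    using sub unfolding ext_strategy_def by blast
  have NV: "?N \<subseteq> V" unfolding screen_nbhd_def by blast
  have pathV: "\<And>a b xs. path_between ?N E a b xs \<Longrightarrow> path_between V E a b xs"
    using NV unfolding path_between_def by blast
  have SV: "u \<in> V" if Su: "?S u" for u
  proof -
    obtain xs where "path_between V E v u xs" using Su unfolding screens_def by blast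
    then show "u \<in> V" unfolding path_alt by (metis last_in_set subsetD)
  qed
  have SN: "\<And>u. ?S u \<Longrightarrow> u \<in> ?N" using SV unfolding screen_nbhd_def by blast
  have sminV: "smin \<in> V" using SV smin .
  have Sge: "snd (f v) \<le> fst (f s) \<and> fst (f smin) \<le> fst (f s)" if Ss: "?S s" for s
  proof -
    have "snd (f v) \<le> fst (f s)" using Ss unfolding screens_def ilt_def igt_def by blast
    moreover have "fst (f smin) \<le> fst (f s)"
    proof (cases "s = smin")
      case False
      then have "snd (f smin) \<le> fst (f s)" using smin_min Ss unfolding ilt_def igt_def by blast
      then show ?thesis using fint[OF sminV] by linarith
    qed simp
    ultimately show ?thesis by blast
  qed
  have NSpath: "\<forall>x\<in>set xs. \<not> ?S x" if hh: "u \<in> ?N" "\<not> ?S u" "path_between V E u v xs" for u xs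
  proof -
    obtain ys where ys: "path_between V E u v ys" "\<forall>x\<in>set ys. \<not> ?S x"
      using hh(1,2) unfolding screen_nbhd_def by blast
    have "xs = ys" using puniq ys(1) hh(3) by blast
    then show ?thesis using ys(2) by simp
  qed
  have NSlt: "fst (f u) < snd (f v)" if hh: "u \<in> ?N" "\<not> ?S u" for u
  proof (rule ccontr)
    assume "\<not> fst (f u) < snd (f v)"
    then have il: "ilt (f v) (f u)" unfolding ilt_def igt_def by simp
    obtain ys where ys: "path_between V E u v ys" "\<forall>x\<in>set ys. \<not> ?S x"
      using hh(1,2) unfolding screen_nbhd_def by blast
    have "u \<in> set ys" using ys(1) unfolding path_alt by (metis hd_in_set)
    then obtain y where "y \<in> set ys" "?S y" using screen_on_path[OF ys(1) sym _ il] by blast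
    then show False using ys(2) by blast
  qed
  have outS: "\<exists>s\<in>set xs. ?S s" if "u \<in> V" "u \<notin> ?N" "path_between V E u v xs" for u xs
    using that unfolding screen_nbhd_def by blast
  have f'eq: "\<And>x. x \<in> V \<Longrightarrow> \<not> (x \<in> ?N \<and> \<not> ?S x) \<Longrightarrow> f' x = f x" using out scr by blast
  have f'lt: "\<And>x. x \<in> ?N \<Longrightarrow> \<not> ?S x \<Longrightarrow> snd (f' x) \<le> fst (f smin)"
    using nscr unfolding ilt_def igt_def by blast
  define Q where "Q = (\<lambda>a b. \<exists>xs. path_between V E a b xs \<and> (\<exists>y\<in>set xs. igt (f' y) (f' a) \<and> igt (f' y) (f' b)))"
  have Qsym: "Q b a" if Qab: "Q a b" for a b
  proof -
    obtain xs y where xs: "path_between V E a b xs" "y \<in> set xs" "igt (f' y) (f' a)" "igt (f' y) (f' b)"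
      using Qab unfolding Q_def by blast
    have "path_between V E b a (rev xs)" using path_rev[OF xs(1) sym] .
    moreover have "y \<in> set (rev xs)" using xs(2) by simp
    ultimately show ?thesis unfolding Q_def using xs(3,4) by blast
  qed
  have caseC: "Q a b" if a: "a \<in> ?N" and b: "b \<in> V" "b \<notin> ?N" and ab: "iinter (f' a) (f' b)" for a b
  proof -
    have aV: "a \<in> V" using a NV by blast
    have fb: "f' b = f b" using out b by blast
    have anb: "a \<noteq> b" using a b by blast
    show ?thesis
    proof (cases "?S a")
      case True
      have fa: "f' a = f a" using scr a True by blast
      obtain xs y where xs: "path_between V E a b xs" and y: "y \<in> set xs" "igt (f y) (f a)" "igt (f y) (f b)"
        using fcond[OF aV b(1) anb] ab fa fb by auto
      have yV: "y \<in> V" using xs y unfolding path_alt by blast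
      have "\<not> (y \<in> ?N \<and> \<not> ?S y)"
      proof
        assume "y \<in> ?N \<and> \<not> ?S y"
        then have "fst (f y) < snd (f v)" using NSlt by blast
        moreover have "snd (f v) \<le> fst (f a)" using Sge True by blast
        moreover have "fst (f a) < snd (f a)" using fint aV by blast
        moreover have "snd (f a) \<le> fst (f y)" using y(2) unfolding igt_def .
        ultimately show False by linarith
      qed
      then have fy: "f' y = f y" using f'eq yV by blast
      have "igt (f' y) (f' a)" "igt (f' y) (f' b)" using fy y fa fb by simp_all
      then show ?thesis unfolding Q_def using xs y(1) by blast
    next
      case False
      have ltsm: "snd (f' a) \<le> fst (f smin)" using f'lt a False by blast
      have ov: "fst (f b) < snd (f' a)" using ab fb unfolding iinter_iff by simp
      obtain pa where pa: "path_between V E a b pa" using pex aV b(1) by blast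
      obtain ya where ya: "path_between V E a v ya" using pex aV v by blast
      obtain zs where zs: "path_between V E b v zs" using pex b(1) v by blast
      obtain s where s: "s \<in> set zs" "?S s" using outS b zs by blast
      have pr: "path_between V E b a (rev pa)" using path_rev[OF pa sym] .
      obtain r where r: "path_between V E b v r" "set r \<subseteq> set (rev pa) \<union> set ya"
        using path_concat[OF pr ya] by blast
      have "r = zs" using puniq r(1) zs by blast
      moreover have "s \<notin> set ya" using NSpath[OF a False ya] s(2) by blast
      ultimately have spa: "s \<in> set pa" using r s by auto
      obtain k where k: "k < length pa" "pa ! k = s" using spa by (metis in_set_conv_nth)
      have ds: "path_between V E s b (drop k pa)" using path_drop[OF pa k(1)] k(2) by simp
      have sV: "s \<in> V" using SV s(2) .
      have fs: "f' s = f s" using scr SN s(2) by blast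
      have sge: "snd (f v) \<le> fst (f s)" "fst (f smin) \<le> fst (f s)" using Sge s(2) by auto
      have sint: "fst (f s) < snd (f s)" using fint sV by blast
      have sb: "s \<noteq> b" using SN s(2) b(2) by blast
      show ?thesis
      proof (cases "iinter (f s) (f b)")
        case True
        obtain xs y where xs: "path_between V E s b xs" and y: "y \<in> set xs" "igt (f y) (f s)" "igt (f y) (f b)"
          using fcond[OF sV b(1) sb True] by blast
        have "xs = drop k pa" using puniq xs ds by blast
        then have ypa: "y \<in> set pa" using y(1) by (metis in_set_dropD)
        have yV: "y \<in> V" using pa ypa unfolding path_alt by blast
        have "\<not> (y \<in> ?N \<and> \<not> ?S y)"
        proof
          assume "y \<in> ?N \<and> \<not> ?S y"
          then have "fst (f y) < snd (f v)" using NSlt by blast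
          then show False using sge sint y(2) unfolding igt_def by linarith
        qed
        then have fy: "f' y = f y" using f'eq yV by blast
        have "igt (f' y) (f' a)" using y(2) sint sge ltsm unfolding igt_def fy by linarith
        moreover have "igt (f' y) (f' b)" using fy fb y(3) by simp
        ultimately show ?thesis unfolding Q_def using pa ypa by blast
      next
        case False
        have bint: "fst (f b) < snd (f b)" using fint b(1) by blast
        have "igt (f s) (f b)"
        proof (rule ccontr)
          assume "\<not> igt (f s) (f b)"
          then have "fst (f s) < snd (f b)" unfolding igt_def by simp
          moreover have "fst (f b) < snd (f s)" using ov ltsm sge sint by linarith
          ultimately show False using False sint bint unfolding iinter_iff by simp
        qed
        moreover have "igt (f' s) (f' a)" using ltsm sge unfolding igt_def fs by linarith
        moreover have "igt (f' s) (f' b)" using fs fb calculation(1) by simp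
        ultimately show ?thesis unfolding Q_def using pa spa by blast
      qed
    qed
  qed
  have caseB: "Q a b" if a: "a \<in> V" "a \<notin> ?N" and b: "b \<in> V" "b \<notin> ?N"
    and ab: "iinter (f' a) (f' b)" and anb: "a \<noteq> b" for a b
  proof -
    have fa: "f' a = f a" and fb: "f' b = f b" using out a b by auto
    obtain xs y where xs: "path_between V E a b xs" and y: "y \<in> set xs" "igt (f y) (f a)" "igt (f y) (f b)"
      using fcond[OF a(1) b(1) anb] ab fa fb by auto
    have yV: "y \<in> V" using xs y unfolding path_alt by blast
    show ?thesis
    proof (cases "y \<in> ?N \<and> \<not> ?S y")
      case False
      then have fy: "f' y = f y" using f'eq yV by blast
      have "igt (f' y) (f' a)" "igt (f' y) (f' b)" using fy y fa fb by simp_all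
      then show ?thesis unfolding Q_def using xs y(1) by blast
    next
      case True
      have ylt: "fst (f y) < snd (f v)" using NSlt True by blast
      obtain k where k: "k < length xs" "xs ! k = y" using y(1) by (metis in_set_conv_nth)
      have tk: "path_between V E a y (take (Suc k) xs)" using path_take[OF xs k(1)] k(2) by simp
      obtain ys where ys: "path_between V E y v ys" using pex yV v by blast
      obtain zs where zs: "path_between V E a v zs" using pex a(1) v by blast
      obtain s where s: "s \<in> set zs" "?S s" using outS a zs by blast
      obtain r where r: "path_between V E a v r" "set r \<subseteq> set (take (Suc k) xs) \<union> set ys"
        using path_concat[OF tk ys] by blast
      have "r = zs" using puniq r(1) zs by blast
      moreover have "s \<notin> set ys" using NSpath[OF _ _ ys] True s(2) by blast
      ultimately have "s \<in> set (take (Suc k) xs)" using r s by auto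
      then have sxs: "s \<in> set xs" by (metis in_set_takeD)
      have fs: "f' s = f s" using scr SN s(2) by blast
      have sge: "snd (f v) \<le> fst (f s)" using Sge s(2) by auto
      have "igt (f' s) (f' a)" using y(2) ylt sge unfolding igt_def fs fa by linarith
      moreover have "igt (f' s) (f' b)" using y(3) ylt sge unfolding igt_def fs fb by linarith
      ultimately show ?thesis unfolding Q_def using xs sxs by blast
    qed
  qed
  have part1: "\<forall>u\<in>V. is_interval (f' u) \<and> ilen (f' u) \<ge> w u" using f'_int by blast
  have part2: "\<forall>a\<in>V. \<forall>b\<in>V. a \<noteq> b \<and> iinter (f' a) (f' b) \<longrightarrow> Q a b"
  proof (intro ballI impI)
    fix a b assume a: "a \<in> V" and b: "b \<in> V" and h: "a \<noteq> b \<and> iinter (f' a) (f' b)"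
    show "Q a b"
    proof (cases "a \<in> ?N")
      case aN: True
      show ?thesis
      proof (cases "b \<in> ?N")
        case True
        then obtain xs y where "path_between ?N E a b xs" "y \<in> set xs" "igt (f' y) (f' a)" "igt (f' y) (f' b)"
          using subcond[OF aN True] h by blast
        then show ?thesis unfolding Q_def using pathV by blast
      next
        case False then show ?thesis using caseC[OF aN b False] h by blast
      qed
    next
      case aN: False
      show ?thesis
      proof (cases "b \<in> ?N")
        case True
        have "iinter (f' b) (f' a)" using h unfolding iinter_def by blast
        then have "Q b a" using caseC[OF True a aN] by blast
        then show ?thesis using Qsym by blast
      next
        case False
        then show ?thesis using caseB[OF a aN b False] h by blast
      qed
    qed
  qed
  show ?thesis using part1 part2 unfolding ext_strategy_def Q_def by blast
qed

end
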